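(* Let $k$ be a field, $Q$ a finite connected quiver without oriented cycles with vertex set $Q_0$ and arrow set $Q_1$, and $Z$ a minimal set of paths of length at least two. Then $$\dim_k H^1\big(kQ/\langle Z\rangle,\,kQ/\langle Z\rangle\big)\geq 1-|Q_0|+|Q_1|.$$
   Context: $kQ$ is the path algebra of $Q$, $\langle Z\rangle$ is the two-sided ideal generated by $Z$, and $H^1$ denotes first Hochschild cohomology. $Z$ minimal means no path in $Z$ has a strict sub-path belonging to $Z$. *)

theory Defs
  imports Complex_Main "HOL-Library.Function_Algebras"
begin

text \<open>A path is a pair (v, es): a start vertex v and a list of arrows es (es = [] gives the
trivial path e_v).  Paths are composed left to right: p q is p followed by q.\<close>

definition quiver :: "'v set \<Rightarrow> 'e set \<Rightarrow> ('e \<Rightarrow> 'v) \<Rightarrow> ('e \<Rightarrow> 'v) \<Rightarrow> bool" where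
  "quiver Q0 Q1 s t \<longleftrightarrow> (\<forall>a\<in>Q1. s a \<in> Q0 \<and> t a \<in> Q0)"

definition is_path :: "'v set \<Rightarrow> 'e set \<Rightarrow> ('e \<Rightarrow> 'v) \<Rightarrow> ('e \<Rightarrow> 'v) \<Rightarrow> 'v \<times> 'e list \<Rightarrow> bool" where
  "is_path Q0 Q1 s t p \<longleftrightarrow>
     fst p \<in> Q0 \<and> set (snd p) \<subseteq> Q1 \<and>
     (snd p \<noteq> [] \<longrightarrow> s (hd (snd p)) = fst p) \<and>
     (\<forall>i. Suc i < length (snd p) \<longrightarrow> t (snd p ! i) = s (snd p ! Suc i))"

definition paths :: "'v set \<Rightarrow> 'e set \<Rightarrow> ('e \<Rightarrow> 'v) \<Rightarrow> ('e \<Rightarrow> 'v) \<Rightarrow> ('v \<times> 'e list) set" where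
  "paths Q0 Q1 s t = {p. is_path Q0 Q1 s t p}"

definition psource :: "'v \<times> 'e list \<Rightarrow> 'v" where
  "psource p = fst p"

definition ptarget :: "('e \<Rightarrow> 'v) \<Rightarrow> 'v \<times> 'e list \<Rightarrow> 'v" where
  "ptarget t p = (if snd p = [] then fst p else t (last (snd p)))"

definition pcat :: "'v \<times> 'e list \<Rightarrow> 'v \<times> 'e list \<Rightarrow> 'v \<times> 'e list" where
  "pcat p q = (fst p, snd p @ snd q)"

definition connected_quiver :: "'v set \<Rightarrow> 'e set \<Rightarrow> ('e \<Rightarrow> 'v) \<Rightarrow> ('e \<Rightarrow> 'v) \<Rightarrow> bool" where
  "connected_quiver Q0 Q1 s t \<longleftrightarrow> Q0 \<noteq> {} \<and>
     (\<forall>u\<in>Q0. \<forall>v\<in>Q0. (u, v) \<in> ({(s a, t a) | a. a \<in> Q1} \<union> {(t a, s a) | a. a \<in> Q1})\<^sup>*)"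

definition acyclic_quiver :: "'v set \<Rightarrow> 'e set \<Rightarrow> ('e \<Rightarrow> 'v) \<Rightarrow> ('e \<Rightarrow> 'v) \<Rightarrow> bool" where
  "acyclic_quiver Q0 Q1 s t \<longleftrightarrow>
     (\<forall>p\<in>paths Q0 Q1 s t. snd p \<noteq> [] \<longrightarrow> ptarget t p \<noteq> psource p)"

definition minimal_relations ::
  "'v set \<Rightarrow> 'e set \<Rightarrow> ('e \<Rightarrow> 'v) \<Rightarrow> ('e \<Rightarrow> 'v) \<Rightarrow> ('v \<times> 'e list) set \<Rightarrow> bool" where
  "minimal_relations Q0 Q1 s t Z \<longleftrightarrow>
     Z \<subseteq> paths Q0 Q1 s t \<and> (\<forall>z\<in>Z. 2 \<le> length (snd z)) \<and>
     (\<forall>p\<in>Z. \<forall>q\<in>Z. (\<exists>xs ys. snd p = xs @ snd q @ ys) \<longrightarrow> q = p)"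

text \<open>Elements of kQ: k-valued functions on paths supported on the (finite) set of paths.\<close>
definition pathalg :: "('p set) \<Rightarrow> ('p \<Rightarrow> 'k::field) set" where
  "pathalg P = {x. \<forall>p. p \<notin> P \<longrightarrow> x p = 0}"

definition pscale :: "'k::field \<Rightarrow> ('p \<Rightarrow> 'k) \<Rightarrow> ('p \<Rightarrow> 'k)" where
  "pscale c x = (\<lambda>p. c * x p)"

definition pbasis :: "'p \<Rightarrow> ('p \<Rightarrow> 'k::field)" where
  "pbasis p = (\<lambda>q. if q = p then 1 else 0)"

definition pmult :: "'v set \<Rightarrow> 'e set \<Rightarrow> ('e \<Rightarrow> 'v) \<Rightarrow> ('e \<Rightarrow> 'v) \<Rightarrow>
    (('v \<times> 'e list) \<Rightarrow> 'k::field) \<Rightarrow> (('v \<times> 'e list) \<Rightarrow> 'k) \<Rightarrow> (('v \<times> 'e list) \<Rightarrow> 'k)" where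
  "pmult Q0 Q1 s t x y = (\<lambda>p. \<Sum>q\<in>paths Q0 Q1 s t. \<Sum>r\<in>paths Q0 Q1 s t.
      if ptarget t q = psource r \<and> pcat q r = p then x q * y r else 0)"

definition gen_ideal :: "'v set \<Rightarrow> 'e set \<Rightarrow> ('e \<Rightarrow> 'v) \<Rightarrow> ('e \<Rightarrow> 'v) \<Rightarrow>
    ('v \<times> 'e list) set \<Rightarrow> (('v \<times> 'e list) \<Rightarrow> 'k::field) set" where
  "gen_ideal Q0 Q1 s t Z = \<Inter>{I. I \<subseteq> pathalg (paths Q0 Q1 s t) \<and> 0 \<in> I \<and>
       (\<forall>x\<in>I. \<forall>y\<in>I. x + y \<in> I) \<and> (\<forall>c. \<forall>x\<in>I. pscale c x \<in> I) \<and>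
       pbasis ` Z \<subseteq> I \<and>
       (\<forall>a\<in>pathalg (paths Q0 Q1 s t). \<forall>x\<in>I.
          pmult Q0 Q1 s t a x \<in> I \<and> pmult Q0 Q1 s t x a \<in> I)}"

text \<open>k-linear endomorphisms of A = kQ/I are represented by their lifts: k-linear maps
F : kQ \<rightarrow> kQ with F(I) \<subseteq> I (extended by 0 outside kQ).  Every endomorphism of A lifts,
and two lifts induce the same map of A iff their difference maps kQ into I.\<close>
definition lift_end :: "'v set \<Rightarrow> 'e set \<Rightarrow> ('e \<Rightarrow> 'v) \<Rightarrow> ('e \<Rightarrow> 'v) \<Rightarrow>
    ('v \<times> 'e list) set \<Rightarrow> ((('v \<times> 'e list) \<Rightarrow> 'k::field) \<Rightarrow> (('v \<times> 'e list) \<Rightarrow> 'k)) set" where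
  "lift_end Q0 Q1 s t Z = {F.
      (\<forall>x\<in>pathalg (paths Q0 Q1 s t). F x \<in> pathalg (paths Q0 Q1 s t)) \<and>
      (\<forall>x. x \<notin> pathalg (paths Q0 Q1 s t) \<longrightarrow> F x = 0) \<and>
      (\<forall>x\<in>pathalg (paths Q0 Q1 s t). \<forall>y\<in>pathalg (paths Q0 Q1 s t). F (x + y) = F x + F y) \<and>
      (\<forall>c. \<forall>x\<in>pathalg (paths Q0 Q1 s t). F (pscale c x) = pscale c (F x)) \<and>
      (\<forall>x\<in>gen_ideal Q0 Q1 s t Z. F x \<in> gen_ideal Q0 Q1 s t Z)}"

text \<open>Lifts of derivations of A: Leibniz rule holds modulo I.\<close>
definition lift_der :: "'v set \<Rightarrow> 'e set \<Rightarrow> ('e \<Rightarrow> 'v) \<Rightarrow> ('e \<Rightarrow> 'v) \<Rightarrow>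
    ('v \<times> 'e list) set \<Rightarrow> ((('v \<times> 'e list) \<Rightarrow> 'k::field) \<Rightarrow> (('v \<times> 'e list) \<Rightarrow> 'k)) set" where
  "lift_der Q0 Q1 s t Z = {F \<in> lift_end Q0 Q1 s t Z.
      \<forall>x\<in>pathalg (paths Q0 Q1 s t). \<forall>y\<in>pathalg (paths Q0 Q1 s t).
        F (pmult Q0 Q1 s t x y) - (pmult Q0 Q1 s t x (F y) + pmult Q0 Q1 s t (F x) y)
          \<in> gen_ideal Q0 Q1 s t Z}"

text \<open>Lifts of inner derivations of A: F x \<equiv> a x - x a modulo I for some a.
(This includes all lifts of the zero map, i.e. F with F(kQ) \<subseteq> I.)\<close>
definition lift_inn :: "'v set \<Rightarrow> 'e set \<Rightarrow> ('e \<Rightarrow> 'v) \<Rightarrow> ('e \<Rightarrow> 'v) \<Rightarrow>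
    ('v \<times> 'e list) set \<Rightarrow> ((('v \<times> 'e list) \<Rightarrow> 'k::field) \<Rightarrow> (('v \<times> 'e list) \<Rightarrow> 'k)) set" where
  "lift_inn Q0 Q1 s t Z = {F \<in> lift_end Q0 Q1 s t Z.
      \<exists>a\<in>pathalg (paths Q0 Q1 s t). \<forall>x\<in>pathalg (paths Q0 Q1 s t).
        F x - (pmult Q0 Q1 s t a x - pmult Q0 Q1 s t x a) \<in> gen_ideal Q0 Q1 s t Z}"

definition escale :: "'k::field \<Rightarrow> (('p \<Rightarrow> 'k) \<Rightarrow> ('p \<Rightarrow> 'k)) \<Rightarrow> (('p \<Rightarrow> 'k) \<Rightarrow> ('p \<Rightarrow> 'k))" where
  "escale c F = (\<lambda>x p. c * F x p)"

text \<open>dim_k HH^1(A,A) = dim_k Der(A)/Inn(A) = dim lift_der - dim lift_inn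
(lift_inn is a subspace of lift_der, both finite dimensional, and
Der(A)/Inn(A) \<cong> lift_der/lift_inn).\<close>
definition dim_HH1 :: "'v set \<Rightarrow> 'e set \<Rightarrow> ('e \<Rightarrow> 'v) \<Rightarrow> ('e \<Rightarrow> 'v) \<Rightarrow>
    ('v \<times> 'e list) set \<Rightarrow> 'k::field itself \<Rightarrow> nat" where
  "dim_HH1 Q0 Q1 s t Z (TYPE('k)) =
     vector_space.dim (escale :: 'k \<Rightarrow> _) (lift_der Q0 Q1 s t Z :: ((('v \<times> 'e list) \<Rightarrow> 'k) \<Rightarrow> _) set)
     - vector_space.dim (escale :: 'k \<Rightarrow> _) (lift_inn Q0 Q1 s t Z :: ((('v \<times> 'e list) \<Rightarrow> 'k) \<Rightarrow> _) set)"

end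

theory Submission
  imports Defs "HOL-Library.Function_Algebras"
begin


lemma sum_fun_apply: "(sum f A) x = sum (\<lambda>a. f a x) A"
  by (induct A rule: infinite_finite_induct) auto

locale QS =
  fixes Q0 :: "'v set" and Q1 :: "'e set" and s t :: "'e \<Rightarrow> 'v"
    and Z :: "('v \<times> 'e list) set"
  assumes fin0: "finite Q0" and fin1: "finite Q1"
    and quiv: "quiver Q0 Q1 s t"
    and acyc: "acyclic_quiver Q0 Q1 s t"
    and minr: "minimal_relations Q0 Q1 s t Z"
    and ne: "Q0 \<noteq> {}"
begin

abbreviation "P \<equiv> paths Q0 Q1 s t"

lemma srcQ0: "a \<in> Q1 \<Longrightarrow> s a \<in> Q0" and tgtQ0: "a \<in> Q1 \<Longrightarrow> t a \<in> Q0"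
  using quiv by (auto simp: quiver_def)

lemma inP: "p \<in> P \<longleftrightarrow> is_path Q0 Q1 s t p"
  by (simp add: paths_def)

lemma ptarget_Q0: "p \<in> P \<Longrightarrow> ptarget t p \<in> Q0"
  unfolding inP is_path_def ptarget_def
  by (cases "snd p = []") (auto intro!: tgtQ0)

lemma pcat_path:
  assumes "q \<in> P" "r \<in> P" "ptarget t q = psource r"
  shows "pcat q r \<in> P"
proof -
  have q: "is_path Q0 Q1 s t q" and r: "is_path Q0 Q1 s t r" using assms inP by auto
  show ?thesis unfolding inP is_path_def pcat_def
  proof (intro conjI allI impI)
    show "fst (fst q, snd q @ snd r) \<in> Q0" using q by (simp add: is_path_def)
    show "set (snd (fst q, snd q @ snd r)) \<subseteq> Q1" using q r by (simp add: is_path_def)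
    show "s (hd (snd (fst q, snd q @ snd r))) = fst (fst q, snd q @ snd r)"
      if "snd (fst q, snd q @ snd r) \<noteq> []"
      using q r that assms(3) by (cases "snd q") (auto simp: is_path_def ptarget_def psource_def)
    fix i assume i: "Suc i < length (snd (fst q, snd q @ snd r))"
    show "t (snd (fst q, snd q @ snd r) ! i) = s (snd (fst q, snd q @ snd r) ! Suc i)"
    proof (cases "Suc i < length (snd q)")
      case True then show ?thesis using q by (simp add: is_path_def nth_append)
    next
      case False
      show ?thesis
      proof (cases "i < length (snd q)")
        case True
        then have "i = length (snd q) - 1" "snd q \<noteq> []" "snd r \<noteq> []" using False i by auto
        then show ?thesis using r assms(3) True False
          by (auto simp: is_path_def nth_append ptarget_def psource_def last_conv_nth hd_conv_nth)
      next
        case False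
        then show ?thesis using r i
          by (auto simp: is_path_def nth_append Suc_diff_le)
      qed
    qed
  qed
qed

lemma psource_pcat[simp]: "psource (pcat q r) = psource q"
  by (simp add: psource_def pcat_def)

lemma ptarget_pcat: "ptarget t q = psource r \<Longrightarrow> ptarget t (pcat q r) = ptarget t r"
  by (auto simp add: ptarget_def pcat_def psource_def)

lemma pcat_assoc: "pcat (pcat q r) u = pcat q (pcat r u)"
  by (simp add: pcat_def)


lemma path_len:
  assumes pP: "p \<in> P"
  shows "length (snd p) < card Q0"
proof -
  define es where "es = snd p"
  define n where "n = length es"
  define v where "v i = (if i = 0 then fst p else t (es ! (i - 1)))" for i
  have pp: "is_path Q0 Q1 s t p" using pP inP by auto
  have setes: "set es \<subseteq> Q1" using pp by (simp add: is_path_def es_def)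
  have a: "v i \<in> Q0" if "i \<le> n" for i
  proof (cases "i = 0")
    case True then show ?thesis using pp by (simp add: v_def is_path_def)
  next
    case False
    then have "es ! (i - 1) \<in> Q1" using that setes n_def by (auto simp: subset_iff)
    then show ?thesis using False by (simp add: v_def tgtQ0)
  qed
  have b: "v i = s (es ! i)" if "i < n" for i
  proof (cases i)
    case 0 then show ?thesis using pp that by (auto simp: v_def is_path_def es_def n_def hd_conv_nth)
  next
    case (Suc k) then show ?thesis using pp that by (auto simp: v_def is_path_def es_def n_def)
  qed
  have inj: "inj_on v {0..n}"
  proof (rule ccontr)
    assume "\<not> inj_on v {0..n}"
    then obtain i j where ij: "i \<le> n" "j \<le> n" "i \<noteq> j" "v i = v j" by (auto simp: inj_on_def)
    then obtain i j where ij: "i < j" "j \<le> n" "v i = v j"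
      by (metis linorder_neqE_nat order.strict_trans2 nless_le)
    define p' where "p' = (v i, take (j - i) (drop i es))"
    have len': "length (snd p') = j - i" using ij by (simp add: p'_def n_def)
    have nth': "snd p' ! k = es ! (i + k)" if "k < j - i" for k
      using that ij by (simp add: p'_def n_def)
    have "p' \<in> P" unfolding inP is_path_def
    proof (intro conjI allI impI)
      show "fst p' \<in> Q0" using a ij by (simp add: p'_def)
      show "set (snd p') \<subseteq> Q1" using setes by (auto simp: p'_def dest: in_set_takeD in_set_dropD)
      show "s (hd (snd p')) = fst p'" if "snd p' \<noteq> []"
        using that ij b[of i] nth'[of 0] by (auto simp: hd_conv_nth p'_def)
      fix k assume k: "Suc k < length (snd p')"
      then show "t (snd p' ! k) = s (snd p' ! Suc k)"
        using nth'[of k] nth'[of "Suc k"] len' pp ij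
        by (auto simp: is_path_def es_def n_def)
    qed
    moreover have "snd p' \<noteq> []" using len' ij by auto
    moreover have "ptarget t p' = v j"
    proof -
      have "last (snd p') = snd p' ! (j - i - 1)" using len' ij by (subst last_conv_nth) auto
      also have "\<dots> = es ! (j - 1)" using nth'[of "j - i - 1"] ij by simp
      finally show ?thesis using ij `snd p' \<noteq> []` by (simp add: ptarget_def v_def)
    qed
    ultimately show False using acyc ij by (auto simp: acyclic_quiver_def psource_def p'_def)
  qed
  have "card (v ` {0..n}) \<le> card Q0"
    by (rule card_mono[OF fin0]) (use a in auto)
  then have "n + 1 \<le> card Q0" using card_image[OF inj] by simp
  then show ?thesis by (simp add: n_def es_def)
qed

lemma finP: "finite P"
proof -
  have "P \<subseteq> Q0 \<times> {es. set es \<subseteq> Q1 \<and> length es \<le> card Q0}"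
    using path_len by (force simp: inP is_path_def)
  moreover have "finite (Q0 \<times> {es. set es \<subseteq> Q1 \<and> length es \<le> card Q0})"
    using fin0 fin1 finite_lists_length_le by blast
  ultimately show ?thesis by (rule finite_subset)
qed

end

context QS begin

abbreviation "PA \<equiv> pathalg P"
abbreviation "mult \<equiv> pmult Q0 Q1 s t"

definition Sp where "Sp p = {(q,r). q \<in> P \<and> r \<in> P \<and> ptarget t q = psource r \<and> pcat q r = p}"

lemma finSp: "finite (Sp p)"
  by (rule finite_subset[of _ "P \<times> P"]) (auto simp: Sp_def finP)

lemma Sp_notP: "p \<notin> P \<Longrightarrow> Sp p = {}"
  using pcat_path by (auto simp: Sp_def)

lemma mult_S: "mult x y p = (\<Sum>(q,r)\<in>Sp p. x q * y r)"
proof -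
  have "mult x y p = (\<Sum>(q,r)\<in>P \<times> P. if ptarget t q = psource r \<and> pcat q r = p then x q * y r else 0)"
    unfolding pmult_def by (simp add: sum.cartesian_product)
  also have "\<dots> = (\<Sum>z\<in>{z\<in>P \<times> P. ptarget t (fst z) = psource (snd z) \<and> pcat (fst z) (snd z) = p}. x (fst z) * y (snd z))"
    by (subst sum.inter_filter) (auto simp: finP intro!: sum.cong split: prod.splits)
  also have "{z\<in>P \<times> P. ptarget t (fst z) = psource (snd z) \<and> pcat (fst z) (snd z) = p} = Sp p"
    by (auto simp: Sp_def)
  finally show ?thesis by (simp add: case_prod_beta)
qed

lemma mult_assoc: "mult x (mult y z) = mult (mult x y) z"
proof
  fix p
  have L: "mult x (mult y z) p = (\<Sum>((q,m),(r,u)) \<in> Sigma (Sp p) (\<lambda>a. Sp (snd a)). x q * (y r * z u))"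
    by (simp add: mult_S sum_distrib_left sum.Sigma finSp case_prod_beta)
  have R: "mult (mult x y) z p = (\<Sum>((m,u),(q,r)) \<in> Sigma (Sp p) (\<lambda>a. Sp (fst a)). x q * y r * z u)"
    by (simp add: mult_S sum_distrib_right sum.Sigma finSp case_prod_beta)
  have "(\<Sum>((q,m),(r,u)) \<in> Sigma (Sp p) (\<lambda>a. Sp (snd a)). x q * (y r * z u))
      = (\<Sum>((m,u),(q,r)) \<in> Sigma (Sp p) (\<lambda>a. Sp (fst a)). x q * y r * z u)"
  proof -
    have J: "((pcat q r,u),(q,r)) \<in> Sigma (Sp p) (\<lambda>a. Sp (fst a)) \<and> m = pcat r u"
      if a: "((q,m),(r,u)) \<in> Sigma (Sp p) (\<lambda>a. Sp (snd a))" for q m r u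
    proof -
      have h: "q \<in> P" "m \<in> P" "ptarget t q = psource m" "pcat q m = p"
        "r \<in> P" "u \<in> P" "ptarget t r = psource u" "pcat r u = m"
        using a by (auto simp: Sp_def)
      have qr: "ptarget t q = psource r" using h by auto
      show ?thesis
        using h qr pcat_path[OF h(1) h(5) qr] ptarget_pcat[OF qr]
        by (auto simp: Sp_def pcat_assoc)
    qed
    have I: "((q,pcat r u),(r,u)) \<in> Sigma (Sp p) (\<lambda>a. Sp (snd a)) \<and> m = pcat q r"
      if b: "((m,u),(q,r)) \<in> Sigma (Sp p) (\<lambda>a. Sp (fst a))" for q m r u
    proof -
      have h: "m \<in> P" "u \<in> P" "ptarget t m = psource u" "pcat m u = p"
        "q \<in> P" "r \<in> P" "ptarget t q = psource r" "pcat q r = m"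
        using b by (auto simp: Sp_def)
      have ru: "ptarget t r = psource u" using h ptarget_pcat[OF h(7)] by auto
      show ?thesis
        using h ru pcat_path[OF h(6) h(2) ru]
        by (auto simp: Sp_def pcat_assoc[symmetric])
    qed
    show ?thesis
      apply (rule sum.reindex_bij_witness[of _ "\<lambda>((m,u),(q,r)). ((q, pcat r u),(r,u))"
                                          "\<lambda>((q,m),(r,u)). ((pcat q r,u),(q,r))"])
      using J I by (auto simp: mult.assoc)
  qed
  then show "mult x (mult y z) p = mult (mult x y) z p" using L R by simp
qed

lemma mult_add_left: "mult (x + y) z = mult x z + mult y z"
  by (rule ext) (simp add: mult_S sum.distrib[symmetric] distrib_right case_prod_beta)
lemma mult_add_right: "mult x (y + z) = mult x y + mult x z"
  by (rule ext) (simp add: mult_S sum.distrib[symmetric] distrib_left case_prod_beta)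
lemma mult_diff_left: "mult (x - y) z = mult x z - mult y z"
  by (rule ext) (simp add: mult_S sum_subtractf[symmetric] left_diff_distrib case_prod_beta)
lemma mult_diff_right: "mult x (y - z) = mult x y - mult x z"
  by (rule ext) (simp add: mult_S sum_subtractf[symmetric] right_diff_distrib case_prod_beta)
lemma mult_scale_left: "mult (pscale c x) z = pscale c (mult x z)"
  by (rule ext) (simp add: mult_S pscale_def sum_distrib_left mult.assoc case_prod_beta)
lemma mult_scale_right: "mult x (pscale c z) = pscale c (mult x z)"
  by (rule ext) (simp add: mult_S pscale_def sum_distrib_left mult.left_commute case_prod_beta)

lemma mult_PA: "mult x y \<in> PA"
  by (simp add: pathalg_def mult_S Sp_notP)

lemma PA_add: "x \<in> PA \<Longrightarrow> y \<in> PA \<Longrightarrow> x + y \<in> PA"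
  and PA_diff: "x \<in> PA \<Longrightarrow> y \<in> PA \<Longrightarrow> x - y \<in> PA"
  and PA_scale: "x \<in> PA \<Longrightarrow> pscale c x \<in> PA"
  and PA_zero: "0 \<in> PA"
  and PA_basis: "p \<in> P \<Longrightarrow> pbasis p \<in> PA"
  by (auto simp: pathalg_def pscale_def pbasis_def)

end

context QS begin

abbreviation "II \<equiv> gen_ideal Q0 Q1 s t Z"

lemma ZP: "Z \<subseteq> P" and Zlen: "z \<in> Z \<Longrightarrow> 2 \<le> length (snd z)"
  using minr by (auto simp: minimal_relations_def)

definition isI :: "(('v \<times> 'e list) \<Rightarrow> 'k::field) set \<Rightarrow> bool" where
  "isI J \<longleftrightarrow> J \<subseteq> PA \<and> 0 \<in> J \<and>
       (\<forall>x\<in>J. \<forall>y\<in>J. x + y \<in> J) \<and> (\<forall>c. \<forall>x\<in>J. pscale c x \<in> J) \<and>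
       pbasis ` Z \<subseteq> J \<and>
       (\<forall>a\<in>PA. \<forall>x\<in>J. mult a x \<in> J \<and> mult x a \<in> J)"

lemma II_eq: "II = \<Inter>{J. isI J}"
  unfolding gen_ideal_def isI_def by (rule refl)

lemma I_lower:
  assumes "J \<subseteq> PA" "0 \<in> J" "\<And>x y. x \<in> J \<Longrightarrow> y \<in> J \<Longrightarrow> x + y \<in> J"
    "\<And>c x. x \<in> J \<Longrightarrow> pscale c x \<in> J" "\<And>z. z \<in> Z \<Longrightarrow> pbasis z \<in> J"
    "\<And>a x. a \<in> PA \<Longrightarrow> x \<in> J \<Longrightarrow> mult a x \<in> J"
    "\<And>a x. a \<in> PA \<Longrightarrow> x \<in> J \<Longrightarrow> mult x a \<in> J"
  shows "II \<subseteq> J"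
proof -
  have "isI J" unfolding isI_def
    apply (intro conjI)
    subgoal by fact
    subgoal by fact
    subgoal using assms(3) by blast
    subgoal using assms(4) by blast
    subgoal using assms(5) by blast
    subgoal using assms(6,7) by blast
    done
  then show ?thesis unfolding II_eq by (rule Inter_lower[OF CollectI])
qed

lemma isI_D: "isI J \<Longrightarrow> x \<in> II \<Longrightarrow> x \<in> J"
  unfolding II_eq by (erule InterD) simp

lemma I_intro: "(\<And>J. isI J \<Longrightarrow> x \<in> J) \<Longrightarrow> x \<in> II"
  unfolding II_eq by (rule InterI) simp

lemma isI_0: "isI J \<Longrightarrow> 0 \<in> J"
  and isI_add: "isI J \<Longrightarrow> x \<in> J \<Longrightarrow> y \<in> J \<Longrightarrow> x + y \<in> J"
  and isI_scale: "isI J \<Longrightarrow> x \<in> J \<Longrightarrow> pscale c x \<in> J"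
  and isI_basis: "isI J \<Longrightarrow> z \<in> Z \<Longrightarrow> pbasis z \<in> J"
  and isI_lmult: "isI J \<Longrightarrow> a \<in> PA \<Longrightarrow> x \<in> J \<Longrightarrow> mult a x \<in> J"
  and isI_rmult: "isI J \<Longrightarrow> a \<in> PA \<Longrightarrow> x \<in> J \<Longrightarrow> mult x a \<in> J"
  unfolding isI_def by auto

lemma I_zero: "0 \<in> II"
  by (rule I_intro) (rule isI_0)
lemma I_add: "x \<in> II \<Longrightarrow> y \<in> II \<Longrightarrow> x + y \<in> II"
  by (rule I_intro) (rule isI_add, assumption, (erule isI_D, assumption)+)
lemma I_scale: "x \<in> II \<Longrightarrow> pscale c x \<in> II"
  by (rule I_intro) (rule isI_scale, assumption, (erule isI_D, assumption)+)
lemma I_basis: "z \<in> Z \<Longrightarrow> pbasis z \<in> II"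
  by (rule I_intro) (rule isI_basis)
lemma I_lmult: "a \<in> PA \<Longrightarrow> x \<in> II \<Longrightarrow> mult a x \<in> II"
  by (rule I_intro) (rule isI_lmult, assumption, assumption, (erule isI_D, assumption)+)
lemma I_rmult: "a \<in> PA \<Longrightarrow> x \<in> II \<Longrightarrow> mult x a \<in> II"
  by (rule I_intro) (rule isI_rmult, assumption, assumption, (erule isI_D, assumption)+)

lemma I_PA: "II \<subseteq> PA"
  apply (rule I_lower)
  apply (rule subset_refl)
  apply (rule PA_zero)
  apply (erule (1) PA_add)
  apply (erule PA_scale)
  apply (rule PA_basis) using ZP apply blast
  apply (rule mult_PA)
  apply (rule mult_PA)
  done

lemma neg_pscale: "- x = pscale (-1) x"
  by (rule ext) (simp add: pscale_def)

lemma I_uminus: "x \<in> II \<Longrightarrow> - x \<in> II"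
  unfolding neg_pscale by (rule I_scale)

lemma I_diff: "x \<in> II \<Longrightarrow> y \<in> II \<Longrightarrow> x - y \<in> II"
  unfolding diff_conv_add_uminus by (intro I_add I_uminus)

lemma Sp_len: "(q, r) \<in> Sp p \<Longrightarrow> length (snd q) \<le> length (snd p) \<and> length (snd r) \<le> length (snd p)"
  by (auto simp: Sp_def pcat_def)

lemma I_low: "x \<in> II \<Longrightarrow> length (snd p) \<le> 1 \<Longrightarrow> x p = 0"
proof -
  let ?J = "{x\<in>PA. \<forall>p. length (snd p) \<le> 1 \<longrightarrow> x p = 0}"
  have S0: "(\<Sum>(q,r)\<in>Sp p. f q r) = 0" if "\<And>q r. (q,r) \<in> Sp p \<Longrightarrow> f q r = 0" for f :: "_ \<Rightarrow> _ \<Rightarrow> 'k::field" and p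
    by (rule sum.neutral) (use that in auto)
  have "II \<subseteq> ?J"
  proof (rule I_lower)
    show "?J \<subseteq> PA" by blast
    show "0 \<in> ?J" using PA_zero by simp
    show "x + y \<in> ?J" if "x \<in> ?J" "y \<in> ?J" for x y using that PA_add by auto
    show "pscale c x \<in> ?J" if "x \<in> ?J" for c x using that PA_scale by (auto simp: pscale_def)
    show "pbasis z \<in> ?J" if "z \<in> Z" for z
      using that Zlen[of z] ZP PA_basis[of z] by (auto simp: pbasis_def)
    show "mult a x \<in> ?J" if "x \<in> ?J" for a x
    proof -
      have "mult a x p = 0" if "length (snd p) \<le> 1" for p
        unfolding mult_S using \<open>x \<in> ?J\<close> that by (intro S0) (auto dest!: Sp_len)
      then show ?thesis using mult_PA by simp
    qed
    show "mult x a \<in> ?J" if "x \<in> ?J" for a x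
    proof -
      have "mult x a p = 0" if "length (snd p) \<le> 1" for p
        unfolding mult_S using \<open>x \<in> ?J\<close> that by (intro S0) (auto dest!: Sp_len)
      then show ?thesis using mult_PA by simp
    qed
  qed
  then show "x \<in> II \<Longrightarrow> length (snd p) \<le> 1 \<Longrightarrow> x p = 0" by (cases p) auto
qed

end

context QS begin

definition wt :: "('e \<Rightarrow> 'k::field) \<Rightarrow> 'v \<times> 'e list \<Rightarrow> 'k" where
  "wt lam p = sum_list (map lam (snd p))"

definition Dl :: "('e \<Rightarrow> 'k::field) \<Rightarrow> (('v \<times> 'e list) \<Rightarrow> 'k) \<Rightarrow> (('v \<times> 'e list) \<Rightarrow> 'k)" where
  "Dl lam x = (if x \<in> PA then (\<lambda>p. wt lam p * x p) else 0)"

lemma wt_pcat: "wt lam (pcat q r) = wt lam q + wt lam r"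
  by (simp add: wt_def pcat_def)

lemma Dl_PA: "Dl lam x \<in> PA"
  by (auto simp: Dl_def pathalg_def)

lemma Dl_in: "x \<in> PA \<Longrightarrow> Dl lam x = (\<lambda>p. wt lam p * x p)"
  by (simp add: Dl_def)

lemma Dl_add: "x \<in> PA \<Longrightarrow> y \<in> PA \<Longrightarrow> Dl lam (x + y) = Dl lam x + Dl lam y"
  by (simp add: Dl_in PA_add distrib_left fun_eq_iff)

lemma Dl_scale: assumes "x \<in> PA" shows "Dl lam (pscale c x) = pscale c (Dl lam x)"
  unfolding Dl_in[OF assms] Dl_in[OF PA_scale[OF assms]] by (simp add: pscale_def fun_eq_iff mult.left_commute)

lemma Dl_basis: assumes "p \<in> P" shows "Dl lam (pbasis p) = pscale (wt lam p) (pbasis p)"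
  unfolding Dl_in[OF PA_basis[OF assms]] by (simp add: pscale_def fun_eq_iff pbasis_def)

lemma Dl_leibniz:
  assumes "x \<in> PA" "y \<in> PA"
  shows "Dl lam (mult x y) = mult x (Dl lam y) + mult (Dl lam x) y"
proof (rule ext)
  fix p
  have "Dl lam (mult x y) p = (\<Sum>(q,r)\<in>Sp p. wt lam p * (x q * y r))"
    by (simp add: Dl_in mult_PA mult_S sum_distrib_left case_prod_beta)
  also have "\<dots> = (\<Sum>(q,r)\<in>Sp p. x q * (wt lam r * y r) + wt lam q * x q * y r)"
    by (rule sum.cong) (auto simp: Sp_def wt_pcat algebra_simps)
  also have "\<dots> = (mult x (Dl lam y) + mult (Dl lam x) y) p"
    by (simp add: Dl_in assms mult_S sum.distrib case_prod_beta)
  finally show "Dl lam (mult x y) p = (mult x (Dl lam y) + mult (Dl lam x) y) p" .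
qed

lemma Dl_I: "x \<in> II \<Longrightarrow> Dl lam x \<in> II"
proof -
  let ?J = "{x\<in>II. Dl lam x \<in> II}"
  have "II \<subseteq> ?J"
  proof (rule I_lower)
    show "?J \<subseteq> PA" using I_PA by blast
    have "Dl lam 0 = 0" by (rule ext) (simp add: Dl_in[OF PA_zero])
    then show "0 \<in> ?J" using I_zero by simp
    show "x + y \<in> ?J" if "x \<in> ?J" "y \<in> ?J" for x y
    proof -
      have h: "x \<in> II" "Dl lam x \<in> II" "y \<in> II" "Dl lam y \<in> II" using that by auto
      have "x \<in> PA" "y \<in> PA" using h(1,3) I_PA by auto
      then show ?thesis using h by (simp add: Dl_add I_add)
    qed
    show "pscale c x \<in> ?J" if "x \<in> ?J" for c x
    proof -
      have h: "x \<in> II" "Dl lam x \<in> II" using that by auto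
      have "x \<in> PA" using h(1) I_PA by auto
      then show ?thesis using h by (simp add: Dl_scale I_scale)
    qed
    show "pbasis z \<in> ?J" if "z \<in> Z" for z
    proof -
      have "z \<in> P" using that ZP by auto
      then show ?thesis using that by (simp add: Dl_basis I_scale I_basis)
    qed
    show "mult a x \<in> ?J" if "a \<in> PA" "x \<in> ?J" for a x
    proof -
      have x: "x \<in> II" "Dl lam x \<in> II" "x \<in> PA" using that I_PA by auto
      have "Dl lam (mult a x) \<in> II"
        unfolding Dl_leibniz[OF \<open>a \<in> PA\<close> x(3)]
        by (intro I_add I_lmult I_rmult x Dl_PA that)
      then show ?thesis using I_lmult[OF that(1) x(1)] by simp
    qed
    show "mult x a \<in> ?J" if "a \<in> PA" "x \<in> ?J" for a x
    proof -
      have x: "x \<in> II" "Dl lam x \<in> II" "x \<in> PA" using that I_PA by auto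
      have "Dl lam (mult x a) \<in> II"
        unfolding Dl_leibniz[OF x(3) \<open>a \<in> PA\<close>]
        by (intro I_add I_lmult I_rmult x Dl_PA that)
      then show ?thesis using I_rmult[OF that(1) x(1)] by simp
    qed
  qed
  then show "x \<in> II \<Longrightarrow> Dl lam x \<in> II" by blast
qed

abbreviation "LE \<equiv> lift_end Q0 Q1 s t Z"
abbreviation "LD \<equiv> lift_der Q0 Q1 s t Z"
abbreviation "LI \<equiv> lift_inn Q0 Q1 s t Z"

lemma Dl_LE: "Dl lam \<in> LE"
  unfolding lift_end_def
  by (auto simp: Dl_PA Dl_add Dl_scale Dl_I) (simp add: Dl_def)

lemma Dl_LD: "Dl lam \<in> LD"
  unfolding lift_der_def using Dl_LE by (simp add: Dl_leibniz I_zero)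

lemma LI_LD: "LI \<subseteq> LD"
proof
  fix F assume F: "F \<in> LI"
  then have FE: "F \<in> LE" by (simp add: lift_inn_def)
  from F obtain a where a: "a \<in> PA" and ia: "\<And>x. x \<in> PA \<Longrightarrow> F x - (mult a x - mult x a) \<in> II"
    by (auto simp: lift_inn_def)
  define i where "i x = F x - (mult a x - mult x a)" for x
  have Fi: "F x = i x + (mult a x - mult x a)" for x by (simp add: i_def)
  have "F (mult x y) - (mult x (F y) + mult (F x) y) \<in> II" if "x \<in> PA" "y \<in> PA" for x y
  proof -
    have "F (mult x y) - (mult x (F y) + mult (F x) y)
        = i (mult x y) - mult x (i y) - mult (i x) y"
      unfolding Fi
      by (simp add: mult_add_left mult_add_right mult_diff_left mult_diff_right mult_assoc algebra_simps)
    also have "\<dots> \<in> II"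
      using ia that mult_PA by (intro I_diff I_lmult I_rmult) (auto simp: i_def)
    finally show ?thesis .
  qed
  then show "F \<in> LD" using FE by (simp add: lift_der_def)
qed

end

context QS begin

definition pa :: "'e \<Rightarrow> 'v \<times> 'e list" where "pa \<alpha> = (s \<alpha>, [\<alpha>])"

lemma pa_P: "\<alpha> \<in> Q1 \<Longrightarrow> pa \<alpha> \<in> P"
  by (simp add: pa_def inP is_path_def srcQ0)

lemma triv_P: "v \<in> Q0 \<Longrightarrow> (v, []) \<in> P"
  by (simp add: inP is_path_def)

lemma Sp_pa: assumes "\<alpha> \<in> Q1"
  shows "Sp (pa \<alpha>) = {((s \<alpha>, []), pa \<alpha>), (pa \<alpha>, (t \<alpha>, []))}"
proof (rule set_eqI, rule iffI)
  fix z assume z: "z \<in> Sp (pa \<alpha>)"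
  obtain q r where zz: "z = (q, r)" by (cases z)
  have h: "ptarget t q = psource r" "pcat q r = pa \<alpha>" using z zz by (auto simp: Sp_def)
  then have fq: "fst q = s \<alpha>" and app: "snd q @ snd r = [\<alpha>]" by (auto simp: pcat_def pa_def)
  from app have "(snd q = [] \<and> snd r = [\<alpha>]) \<or> (snd q = [\<alpha>] \<and> snd r = [])"
    by (auto simp: append_eq_Cons_conv)
  then show "z \<in> {((s \<alpha>, []), pa \<alpha>), (pa \<alpha>, (t \<alpha>, []))}"
  proof
    assume c: "snd q = [] \<and> snd r = [\<alpha>]"
    then have "q = (s \<alpha>, [])" using fq by (cases q) auto
    moreover have "r = pa \<alpha>" using c h(1) fq by (cases r) (auto simp: ptarget_def psource_def pa_def)
    ultimately show ?thesis using zz by simp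
  next
    assume c: "snd q = [\<alpha>] \<and> snd r = []"
    then have "q = pa \<alpha>" using fq by (cases q) (auto simp: pa_def)
    moreover have "r = (t \<alpha>, [])" using c h(1) by (cases r) (auto simp: ptarget_def psource_def)
    ultimately show ?thesis using zz by simp
  qed
next
  fix z assume "z \<in> {((s \<alpha>, []), pa \<alpha>), (pa \<alpha>, (t \<alpha>, []))}"
  then show "z \<in> Sp (pa \<alpha>)"
    using assms pa_P triv_P srcQ0 tgtQ0
    by (auto simp: Sp_def pa_def ptarget_def psource_def pcat_def)
qed

lemma pa_ne: "(v, []) \<noteq> pa \<alpha>" by (simp add: pa_def)

lemma mult_basis_left: "\<alpha> \<in> Q1 \<Longrightarrow> mult a (pbasis (pa \<alpha>)) (pa \<alpha>) = a (s \<alpha>, [])"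
  unfolding mult_S Sp_pa by (subst sum.insert) (auto simp: pbasis_def pa_def)

lemma mult_basis_right: "\<alpha> \<in> Q1 \<Longrightarrow> mult (pbasis (pa \<alpha>)) a (pa \<alpha>) = a (t \<alpha>, [])"
  unfolding mult_S Sp_pa by (subst sum.insert) (auto simp: pbasis_def pa_def)

lemma LI_coef:
  assumes "F \<in> LI"
  obtains a :: "('v \<times> 'e list) \<Rightarrow> 'k::field" where
    "\<And>\<alpha>. \<alpha> \<in> Q1 \<Longrightarrow> F (pbasis (pa \<alpha>)) (pa \<alpha>) = a (s \<alpha>, []) - a (t \<alpha>, [])"
proof -
  from assms obtain a where a: "a \<in> PA" and ia: "\<And>x. x \<in> PA \<Longrightarrow> F x - (mult a x - mult x a) \<in> II"
    by (auto simp: lift_inn_def)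
  have "F (pbasis (pa \<alpha>)) (pa \<alpha>) = a (s \<alpha>, []) - a (t \<alpha>, [])" if "\<alpha> \<in> Q1" for \<alpha>
  proof -
    have "(F (pbasis (pa \<alpha>)) - (mult a (pbasis (pa \<alpha>)) - mult (pbasis (pa \<alpha>)) a)) (pa \<alpha>) = 0"
      by (rule I_low[OF ia[OF PA_basis[OF pa_P[OF that]]]]) (simp add: pa_def)
    then show ?thesis using mult_basis_left[OF that, of a] mult_basis_right[OF that, of a] by simp
  qed
  then show ?thesis by (rule that)
qed

lemma Dl_coef: assumes "\<alpha> \<in> Q1" shows "Dl lam (pbasis (pa \<alpha>)) (pa \<alpha>) = lam \<alpha>"
  unfolding Dl_basis[OF pa_P[OF assms]] by (simp add: pscale_def pbasis_def wt_def pa_def)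

end


interpretation esc: vector_space "escale :: 'k::field \<Rightarrow> (('p \<Rightarrow> 'k) \<Rightarrow> ('p \<Rightarrow> 'k)) \<Rightarrow> _"
  by unfold_locales (auto simp: escale_def fun_eq_iff algebra_simps)

definition fscale :: "'k::field \<Rightarrow> ('e \<Rightarrow> 'k) \<Rightarrow> ('e \<Rightarrow> 'k)" where
  "fscale c f = (\<lambda>x. c * f x)"

interpretation fs: vector_space "fscale :: 'k::field \<Rightarrow> ('e \<Rightarrow> 'k) \<Rightarrow> _"
  by unfold_locales (auto simp: fscale_def fun_eq_iff algebra_simps)

context QS begin

definition Epq :: "'v \<times> 'e list \<Rightarrow> 'v \<times> 'e list \<Rightarrow> (('v \<times> 'e list) \<Rightarrow> 'k::field) \<Rightarrow> (('v \<times> 'e list) \<Rightarrow> 'k)" where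
  "Epq p q = (\<lambda>x. if x \<in> PA then pscale (x p) (pbasis q) else 0)"

lemma PA_sum: "(\<And>a. a \<in> A \<Longrightarrow> g a \<in> PA) \<Longrightarrow> sum g A \<in> PA"
  by (induct A rule: infinite_finite_induct) (auto intro: PA_add PA_zero)

lemma PA_expand: "x \<in> PA \<Longrightarrow> x = (\<Sum>p\<in>P. pscale (x p) (pbasis p))"
proof (rule ext)
  fix r assume x: "x \<in> PA"
  have "(\<Sum>p\<in>P. pscale (x p) (pbasis p)) r = (\<Sum>p\<in>P. if r = p then x p else 0)"
    by (simp add: sum_fun_apply pscale_def pbasis_def if_distrib cong: if_cong)
  also have "\<dots> = x r" using x finP by (cases r) (auto simp: pathalg_def)
  finally show "x r = (\<Sum>p\<in>P. pscale (x p) (pbasis p)) r" ..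
qed

lemma LE_props:
  assumes "F \<in> LE"
  shows "\<And>x. x \<in> PA \<Longrightarrow> F x \<in> PA" "\<And>x. x \<notin> PA \<Longrightarrow> F x = 0"
    "\<And>x y. x \<in> PA \<Longrightarrow> y \<in> PA \<Longrightarrow> F (x + y) = F x + F y"
    "\<And>c x. x \<in> PA \<Longrightarrow> F (pscale c x) = pscale c (F x)"
  using assms by (auto simp: lift_end_def)

lemma LE_sum:
  assumes F: "F \<in> LE" and g: "\<And>a. a \<in> A \<Longrightarrow> g a \<in> PA" and fin: "finite A"
  shows "F (sum g A) = (\<Sum>a\<in>A. F (g a))"
  using fin g
proof (induct A rule: finite_induct)
  case empty
  have "F (0 + 0) = F 0 + F 0" using LE_props(3)[OF F PA_zero PA_zero] .
  then have "F 0 = 0" by simp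
  then show ?case by (simp only: sum.empty)
next
  case (insert a A)
  have "F (sum g (insert a A)) = F (g a + sum g A)" by (simp only: sum.insert[OF insert(1,2)])
  also have "\<dots> = F (g a) + F (sum g A)"
    by (rule LE_props(3)[OF F]) (use insert in \<open>auto intro!: PA_sum\<close>)
  also have "\<dots> = (\<Sum>a\<in>insert a A. F (g a))"
    using insert(3)[OF insert(4)] by (simp add: sum.insert[OF insert(1,2)])
  finally show ?case .
qed

lemma LE_span: "LE \<subseteq> esc.span ((\<lambda>(p,q). Epq p q) ` (P \<times> P))"
proof
  fix F :: "(('v \<times> 'e list) \<Rightarrow> 'k::field) \<Rightarrow> (('v \<times> 'e list) \<Rightarrow> 'k)"
  assume F: "F \<in> LE"
  have eq: "F = (\<Sum>(p,q)\<in>P \<times> P. escale (F (pbasis p) q) (Epq p q))"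
  proof (rule ext, rule ext)
    fix x r
    show "F x r = (\<Sum>(p,q)\<in>P \<times> P. escale (F (pbasis p) q) (Epq p q)) x r"
    proof (cases "x \<in> PA")
      case False
      then show ?thesis using LE_props(2)[OF F False]
        by (simp add: sum_fun_apply escale_def Epq_def case_prod_beta)
    next
      case True
      have Fx: "F x = (\<Sum>p\<in>P. pscale (x p) (F (pbasis p)))"
        apply (subst PA_expand[OF True])
        apply (subst LE_sum[OF F _ finP])
        using PA_scale PA_basis apply blast
        by (intro sum.cong refl LE_props(4)[OF F] PA_basis)
      have inner: "(\<Sum>q\<in>P. F (pbasis p) q * (x p * pbasis q r)) = x p * F (pbasis p) r"
        if "p \<in> P" for p
      proof -
        have "(\<Sum>q\<in>P. F (pbasis p) q * (x p * pbasis q r)) = (\<Sum>q\<in>P. if q = r then x p * F (pbasis p) r else 0)"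
          by (rule sum.cong) (auto simp: pbasis_def)
        also have "\<dots> = x p * F (pbasis p) r"
          using LE_props(1)[OF F PA_basis[OF that]] finP by (cases r) (auto simp: pathalg_def)
        finally show ?thesis .
      qed
      have "(\<Sum>(p,q)\<in>P \<times> P. escale (F (pbasis p) q) (Epq p q)) x r
          = (\<Sum>p\<in>P. \<Sum>q\<in>P. F (pbasis p) q * (x p * pbasis q r))"
        by (simp add: sum_fun_apply escale_def Epq_def True pscale_def sum.cartesian_product case_prod_beta)
      also have "\<dots> = (\<Sum>p\<in>P. x p * F (pbasis p) r)"
        using inner by simp
      also have "\<dots> = F x r" by (simp add: Fx sum_fun_apply pscale_def)
      finally show ?thesis by simp
    qed
  qed
  show "F \<in> esc.span ((\<lambda>(p,q). Epq p q) ` (P \<times> P))"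
    by (subst eq, rule esc.span_sum, simp add: case_prod_beta, rule esc.span_scale, rule esc.span_base) auto
qed

end

context QS begin

definition phi :: "((('v \<times> 'e list) \<Rightarrow> 'k::field) \<Rightarrow> (('v \<times> 'e list) \<Rightarrow> 'k)) \<Rightarrow> 'e \<Rightarrow> 'k" where
  "phi F = (\<lambda>\<beta>. if \<beta> \<in> Q1 then F (pbasis (pa \<beta>)) (pa \<beta>) else 0)"

definition dlt :: "'e \<Rightarrow> 'e \<Rightarrow> 'k::field" where
  "dlt \<alpha> = (\<lambda>\<beta>. if \<beta> = \<alpha> then 1 else 0)"

definition gv :: "'v \<Rightarrow> 'e \<Rightarrow> 'k::field" where
  "gv v = (\<lambda>\<beta>. if \<beta> \<in> Q1 then (if s \<beta> = v then 1 else 0) - (if t \<beta> = v then 1 else 0) else 0)"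

lemma phi_span:
  assumes "x \<in> esc.span S"
  shows "phi x \<in> fs.span (phi ` S)"
  using assms
proof (induct rule: esc.span_induct)
  case base
  show ?case unfolding esc.subspace_def
  proof (intro conjI ballI allI; simp)
    have "phi 0 = 0" by (simp add: phi_def fun_eq_iff)
    then show "phi 0 \<in> fs.span (phi ` S)" by (metis fs.span_zero)
  next
    fix x y assume "phi x \<in> fs.span (phi ` S)" "phi y \<in> fs.span (phi ` S)"
    moreover have "phi (x + y) = phi x + phi y" by (simp add: phi_def fun_eq_iff)
    ultimately show "phi (x + y) \<in> fs.span (phi ` S)" using fs.span_add by simp
  next
    fix c x assume "phi x \<in> fs.span (phi ` S)"
    moreover have "phi (escale c x) = fscale c (phi x)" by (simp add: phi_def fun_eq_iff escale_def fscale_def)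
    ultimately show "phi (escale c x) \<in> fs.span (phi ` S)" using fs.span_scale by simp
  qed
next
  case (step x)
  then show ?case by (simp add: fs.span_base)
qed

lemma phi_LI:
  fixes F :: "(('v \<times> 'e list) \<Rightarrow> 'k::field) \<Rightarrow> (('v \<times> 'e list) \<Rightarrow> 'k)"
  assumes F: "F \<in> LI" and v0: "v0 \<in> Q0"
  shows "phi F \<in> fs.span (gv ` (Q0 - {v0}))"
proof -
  obtain a :: "('v \<times> 'e list) \<Rightarrow> 'k::field" where a: "\<And>\<alpha>. \<alpha> \<in> Q1 \<Longrightarrow> F (pbasis (pa \<alpha>)) (pa \<alpha>) = a (s \<alpha>, []) - a (t \<alpha>, [])"
    using LI_coef[OF F] by blast
  define mu where "mu v = a (v, []) - a (v0, [])" for v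
  have fin: "finite (Q0 - {v0})" using fin0 by simp
  have dsum: "(\<Sum>v\<in>Q0 - {v0}. mu v * (if w = v then 1 else 0)) = mu w" if "w \<in> Q0" for w
  proof -
    have "(\<Sum>v\<in>Q0 - {v0}. mu v * (if w = v then 1 else 0)) = (\<Sum>v\<in>Q0 - {v0}. if w = v then mu w else 0)"
      by (rule sum.cong) auto
    also have "\<dots> = (if w \<in> Q0 - {v0} then mu w else 0)" using fin by simp
    also have "\<dots> = mu w" using that by (auto simp: mu_def)
    finally show ?thesis .
  qed
  have "phi F = (\<Sum>v\<in>Q0 - {v0}. fscale (mu v) (gv v))"
  proof (rule ext)
    fix \<beta>
    show "phi F \<beta> = (\<Sum>v\<in>Q0 - {v0}. fscale (mu v) (gv v)) \<beta>"
    proof (cases "\<beta> \<in> Q1")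
      case False then show ?thesis by (simp add: phi_def sum_fun_apply fscale_def gv_def)
    next
      case True
      have "(\<Sum>v\<in>Q0 - {v0}. fscale (mu v) (gv v)) \<beta>
          = (\<Sum>v\<in>Q0 - {v0}. mu v * (if s \<beta> = v then 1 else 0) - mu v * (if t \<beta> = v then 1 else 0))"
        using True by (simp add: sum_fun_apply fscale_def gv_def right_diff_distrib)
      also have "\<dots> = mu (s \<beta>) - mu (t \<beta>)"
        by (simp only: sum_subtractf dsum[OF srcQ0[OF True]] dsum[OF tgtQ0[OF True]])
      also have "\<dots> = phi F \<beta>" using True a[OF True] by (simp add: phi_def mu_def)
      finally show ?thesis by simp
    qed
  qed
  also have "\<dots> \<in> fs.span (gv ` (Q0 - {v0}))"
    by (intro fs.span_sum fs.span_scale fs.span_base) auto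
  finally show ?thesis .
qed

lemma phi_Dl: "\<alpha> \<in> Q1 \<Longrightarrow> phi (Dl (dlt \<alpha>)) = dlt \<alpha>"
  by (auto simp: phi_def fun_eq_iff Dl_coef dlt_def)

lemma dlt_indep: "fs.independent ((dlt :: 'e \<Rightarrow> 'e \<Rightarrow> 'k::field) ` Q1)"
  unfolding fs.dependent_def
proof
  assume "\<exists>a\<in>(dlt :: 'e \<Rightarrow> 'e \<Rightarrow> 'k) ` Q1. a \<in> fs.span ((dlt :: 'e \<Rightarrow> 'e \<Rightarrow> 'k) ` Q1 - {a})"
  then obtain b :: "'e \<Rightarrow> 'k" where b: "b \<in> dlt ` Q1" "b \<in> fs.span (dlt ` Q1 - {b})" ..
  then obtain \<alpha> where "\<alpha> \<in> Q1" "b = dlt \<alpha>" by blast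
  then have al: "\<alpha> \<in> Q1" "(dlt \<alpha> :: 'e \<Rightarrow> 'k) \<in> fs.span ((dlt :: 'e \<Rightarrow> 'e \<Rightarrow> 'k) ` Q1 - {dlt \<alpha>})" using b by auto
  have "fs.span ((dlt :: 'e \<Rightarrow> 'e \<Rightarrow> 'k) ` Q1 - {dlt \<alpha>}) \<subseteq> {f. f \<alpha> = 0}"
  proof (rule fs.span_minimal)
    show "(dlt :: 'e \<Rightarrow> 'e \<Rightarrow> 'k) ` Q1 - {dlt \<alpha>} \<subseteq> {f. f \<alpha> = 0}"
      by (auto simp: dlt_def fun_eq_iff)
    show "fs.subspace {f. f \<alpha> = (0::'k)}"
      by (auto simp: fs.subspace_def fscale_def)
  qed
  then have "(dlt \<alpha> :: 'e \<Rightarrow> 'k) \<alpha> = 0" using al by auto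
  then show False by (simp add: dlt_def)
qed

lemma dlt_card: "card ((dlt :: 'e \<Rightarrow> 'e \<Rightarrow> 'k::field) ` Q1) = card Q1"
proof (rule card_image)
  show "inj_on (dlt :: 'e \<Rightarrow> 'e \<Rightarrow> 'k) Q1"
  proof
    fix x y assume "(dlt x :: 'e \<Rightarrow> 'k) = dlt y"
    then have "(dlt x :: 'e \<Rightarrow> 'k) x = dlt y x" by simp
    then show "x = y" by (simp add: dlt_def split: if_splits)
  qed
qed

end

context QS begin

theorem main: "int (dim_HH1 Q0 Q1 s t Z TYPE('k::field)) \<ge> 1 - int (card Q0) + int (card Q1)"
proof -
  let ?E = "(\<lambda>(p,q). Epq p q) ` (P \<times> P) :: ((('v \<times> 'e list) \<Rightarrow> 'k) \<Rightarrow> (('v \<times> 'e list) \<Rightarrow> 'k)) set"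
  have finE: "finite ?E" using finP by simp
  obtain BA :: "((('v \<times> 'e list) \<Rightarrow> 'k) \<Rightarrow> (('v \<times> 'e list) \<Rightarrow> 'k)) set" where
    BA: "BA \<subseteq> LI" "esc.independent BA" "LI \<subseteq> esc.span BA" "card BA = esc.dim (LI :: ((('v \<times> 'e list) \<Rightarrow> 'k) \<Rightarrow> _) set)"
    by (rule esc.basis_exists)
  obtain BD :: "((('v \<times> 'e list) \<Rightarrow> 'k) \<Rightarrow> (('v \<times> 'e list) \<Rightarrow> 'k)) set" where
    BD: "BD \<subseteq> LD" "esc.independent BD" "LD \<subseteq> esc.span BD" "card BD = esc.dim (LD :: ((('v \<times> 'e list) \<Rightarrow> 'k) \<Rightarrow> _) set)"
    by (rule esc.basis_exists)
  have LDE: "(LD :: ((('v \<times> 'e list) \<Rightarrow> 'k) \<Rightarrow> _) set) \<subseteq> esc.span ?E"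
    using LE_span by (auto simp: lift_der_def)
  have finBD: "finite BD"
    using esc.independent_span_bound[OF finE BD(2)] BD(1) LDE by blast
  define DQ :: "((('v \<times> 'e list) \<Rightarrow> 'k) \<Rightarrow> (('v \<times> 'e list) \<Rightarrow> 'k)) set"
    where "DQ = (\<lambda>\<alpha>. Dl (dlt \<alpha>)) ` Q1"
  obtain B where B: "BA \<subseteq> B" "B \<subseteq> BA \<union> DQ" "esc.independent B" "BA \<union> DQ \<subseteq> esc.span B"
    using esc.maximal_independent_subset_extend[of BA "BA \<union> DQ"] BA(2) by blast
  have BLD: "B \<subseteq> LD" using B(2) BA(1) LI_LD Dl_LD by (auto simp: DQ_def)
  have finB: "finite B" and cardB: "card B \<le> card BD"
    using esc.independent_span_bound[OF finBD B(3)] BLD BD(3) by blast+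
  have finBA: "finite BA" using finB B(1) finite_subset by blast
  have cardsplit: "card B = card BA + card (B - BA)"
    using card_Diff_subset[OF finBA B(1)] card_mono[OF finB B(1)] by simp
  obtain v0 where v0: "v0 \<in> Q0" using ne by blast
  define T :: "('e \<Rightarrow> 'k) set" where "T = gv ` (Q0 - {v0}) \<union> phi ` (B - BA)"
  have finT: "finite T" using fin0 finB by (simp add: T_def)
  have cardT: "card T \<le> (card Q0 - 1) + card (B - BA)"
  proof -
    have "card T \<le> card (gv ` (Q0 - {v0}) :: ('e \<Rightarrow> 'k) set) + card (phi ` (B - BA))"
      unfolding T_def by (rule card_Un_le)
    also have "\<dots> \<le> card (Q0 - {v0}) + card (B - BA)"
      by (intro add_mono card_image_le) (use fin0 finB in auto)
    also have "card (Q0 - {v0}) = card Q0 - 1" using v0 fin0 by simp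
    finally show ?thesis .
  qed
  have phiB: "phi ` B \<subseteq> fs.span T"
  proof
    fix y assume "y \<in> phi ` B"
    then obtain b where b: "b \<in> B" "y = phi b" by blast
    show "y \<in> fs.span T"
    proof (cases "b \<in> BA")
      case True
      then have "phi b \<in> fs.span (gv ` (Q0 - {v0}))" using phi_LI[OF _ v0] BA(1) by blast
      moreover have "fs.span (gv ` (Q0 - {v0})) \<subseteq> fs.span T" by (rule fs.span_mono) (auto simp: T_def)
      ultimately show ?thesis using b by auto
    next
      case False
      then have "phi b \<in> T" using b by (auto simp: T_def)
      then show ?thesis using b fs.span_base by auto
    qed
  qed
  have dltT: "(dlt :: 'e \<Rightarrow> 'e \<Rightarrow> 'k) ` Q1 \<subseteq> fs.span T"
  proof
    fix y assume "y \<in> (dlt :: 'e \<Rightarrow> 'e \<Rightarrow> 'k) ` Q1"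
    then obtain \<alpha> where al: "\<alpha> \<in> Q1" "y = dlt \<alpha>" by blast
    have "Dl (dlt \<alpha>) \<in> esc.span B" using B(4) al by (auto simp: DQ_def)
    then have "phi (Dl (dlt \<alpha>) :: (('v \<times> 'e list) \<Rightarrow> 'k) \<Rightarrow> _) \<in> fs.span (phi ` B)" by (rule phi_span)
    moreover have "phi (Dl (dlt \<alpha>) :: (('v \<times> 'e list) \<Rightarrow> 'k) \<Rightarrow> _) = (dlt \<alpha> :: 'e \<Rightarrow> 'k)"
      by (rule phi_Dl[OF al(1)])
    ultimately have "(dlt \<alpha> :: 'e \<Rightarrow> 'k) \<in> fs.span (phi ` B)" by simp
    also have "fs.span (phi ` B) \<subseteq> fs.span T"
      using fs.span_mono[OF phiB] fs.span_span by blast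
    finally show "y \<in> fs.span T" using al by simp
  qed
  have "card ((dlt :: 'e \<Rightarrow> 'e \<Rightarrow> 'k) ` Q1) \<le> card T"
    using fs.independent_span_bound[OF finT dlt_indep dltT] by blast
  moreover have "card ((dlt :: 'e \<Rightarrow> 'e \<Rightarrow> 'k) ` Q1) = card Q1" by (rule dlt_card)
  ultimately have Q1le: "card Q1 \<le> (card Q0 - 1) + card (B - BA)"
    using cardT by simp
  have "card Q0 \<noteq> 0" using v0 fin0 by auto
  then have c0: "card Q0 \<ge> 1" by linarith
  have dimeq: "dim_HH1 Q0 Q1 s t Z TYPE('k) = card BD - card BA"
    by (simp add: dim_HH1_def BA(4) BD(4))
  show ?thesis unfolding dimeq using Q1le c0 cardsplit cardB by linarith
qed

end

theorem corollary5p2: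
  fixes Q0 :: "'v set" and Q1 :: "'e set" and s t :: "'e \<Rightarrow> 'v"
    and Z :: "('v \<times> 'e list) set"
  assumes "finite Q0" and "finite Q1"
    and "quiver Q0 Q1 s t"
    and "connected_quiver Q0 Q1 s t"
    and "acyclic_quiver Q0 Q1 s t"
    and "minimal_relations Q0 Q1 s t Z"
  shows "int (dim_HH1 Q0 Q1 s t Z TYPE('k::field)) \<ge> 1 - int (card Q0) + int (card Q1)"
proof -
  interpret QS Q0 Q1 s t Z
    using assms by unfold_locales (auto simp: connected_quiver_def)
  show ?thesis by (rule main)
qed


end
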